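(* Let $\mathfrak g=\mathfrak k\oplus\mathfrak m$ be a Pauli-spanned Cartan decomposition and let $b_1,\dots,b_d\in\tilde{\mathfrak m}$ be pairwise commuting Pauli strings. Let $i\neq j$ be indices and $R=\{r_1,r_2,\dots\}$ a list of indices disjoint from $\{i,j\}$. If $\tilde{\mathfrak k}^{ij}_{r_1r_2\dots}$ is non-empty, then $|\tilde{\mathfrak k}^i_{jr_1r_2\dots}|=|\tilde{\mathfrak k}^j_{ir_1r_2\dots}|$.
   Context: Pauli strings on $n$ qubits are tensor products of $I,X,Y,Z$, not all identity; two Pauli strings either commute or anticommute. A Pauli-spanned Cartan decomposition is $\mathfrak g=\mathfrak k\oplus\mathfrak m\subseteq\mathfrak{su}(2^n)$ with $\mathfrak k=\mathrm{span}_{i\mathbb R}\tilde{\mathfrak k}$, $\mathfrak m=\mathrm{span}_{i\mathbb R}\tilde{\mathfrak m}$, where $\tilde{\mathfrak k}\sqcup\tilde{\mathfrak m}$ is the set of all Pauli strings (up to phase) $\sigma$ with $i\sigma\in\mathfrak g$, and $[\mathfrak k,\mathfrak k]\subseteq\mathfrak k$, $[\mathfrak m,\mathfrak m]\subseteq\mathfrak k$, $[\mathfrak k,\mathfrak m]\subseteq\mathfrak m$. For disjoint index lists, $\tilde{\mathfrak k}^{i_1i_2\dots}_{j_1j_2\dots}$ is the set of $k\in\tilde{\mathfrak k}$ anticommuting with every $b_{i_p}$ and commuting with every $b_{j_q}$ (no condition on other indices). *)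

theory Defs
  imports Main
begin

text \<open>Single-qubit Pauli operators, modulo global phase.\<close>
datatype pauli = PI | PX | PY | PZ

fun pmult1 :: "pauli \<Rightarrow> pauli \<Rightarrow> pauli" where
  "pmult1 PI q = q"
| "pmult1 p PI = p"
| "pmult1 PX PX = PI" | "pmult1 PY PY = PI" | "pmult1 PZ PZ = PI"
| "pmult1 PX PY = PZ" | "pmult1 PY PX = PZ"
| "pmult1 PY PZ = PX" | "pmult1 PZ PY = PX"
| "pmult1 PZ PX = PY" | "pmult1 PX PZ = PY"

definition anticomm1 :: "pauli \<Rightarrow> pauli \<Rightarrow> bool" where
  "anticomm1 p q \<longleftrightarrow> p \<noteq> PI \<and> q \<noteq> PI \<and> p \<noteq> q"

type_synonym pstring = "pauli list"

definition is_pauli_string :: "nat \<Rightarrow> pstring \<Rightarrow> bool" where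
  "is_pauli_string n s \<longleftrightarrow> length s = n \<and> (\<exists>p\<in>set s. p \<noteq> PI)"

definition pmult :: "pstring \<Rightarrow> pstring \<Rightarrow> pstring" where
  "pmult s t = map2 pmult1 s t"

text \<open>Tensor products anticommute iff an odd number of tensor factors anticommute.\<close>
definition anticommutes :: "pstring \<Rightarrow> pstring \<Rightarrow> bool" where
  "anticommutes s t \<longleftrightarrow> odd (card {q. q < length s \<and> anticomm1 (s ! q) (t ! q)})"

definition commutes :: "pstring \<Rightarrow> pstring \<Rightarrow> bool" where
  "commutes s t \<longleftrightarrow> \<not> anticommutes s t"

text \<open>The set of Pauli strings (up to phase) occurring in the commutator [i s, i t]:
  it is 0 if s, t commute, and a nonzero multiple of the product s t if they anticommute.\<close>
definition comm_support :: "pstring \<Rightarrow> pstring \<Rightarrow> pstring set" where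
  "comm_support s t = (if anticommutes s t then {pmult s t} else {})"

text \<open>Pauli-spanned Cartan decomposition g = k + m, with k = span_{iR} K, m = span_{iR} M.
  Since Pauli strings are linearly independent and the bracket is bilinear, the inclusions
  [k,k] <= k, [m,m] <= k, [k,m] <= m are equivalent to the conditions on basis elements below.\<close>
definition pauli_cartan :: "nat \<Rightarrow> pstring set \<Rightarrow> pstring set \<Rightarrow> bool" where
  "pauli_cartan n K M \<longleftrightarrow>
     (\<forall>s\<in>K \<union> M. is_pauli_string n s) \<and> K \<inter> M = {} \<and>
     (\<forall>a\<in>K. \<forall>b\<in>K. comm_support a b \<subseteq> K) \<and>
     (\<forall>a\<in>M. \<forall>b\<in>M. comm_support a b \<subseteq> K) \<and>
     (\<forall>a\<in>K. \<forall>b\<in>M. comm_support a b \<subseteq> M)"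

definition ksub :: "pstring set \<Rightarrow> (nat \<Rightarrow> pstring) \<Rightarrow> nat set \<Rightarrow> nat set \<Rightarrow> pstring set" where
  "ksub K b A C = {k\<in>K. (\<forall>p\<in>A. anticommutes k (b p)) \<and> (\<forall>q\<in>C. commutes k (b q))}"

end

theory Submission
  imports Defs
begin

lemma pm1_anti: "anticomm1 (pmult1 a b) c = (anticomm1 a c \<noteq> anticomm1 b c)"
  by (cases a; cases b; cases c) (simp_all add: anticomm1_def)

lemma pm1_cancel: "pmult1 (pmult1 a b) b = a"
  by (cases a; cases b) simp_all

lemma anti1_sym: "anticomm1 a b = anticomm1 b a"
  by (auto simp: anticomm1_def)

lemma odd_symdiff:
  assumes "finite A" "finite B"
  shows "odd (card ((A - B) \<union> (B - A))) \<longleftrightarrow> (odd (card A) \<noteq> odd (card B))"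
proof -
  have a: "card A = card (A - B) + card (A \<inter> B)"
  proof -
    have "card ((A - B) \<union> (A \<inter> B)) = card (A - B) + card (A \<inter> B)"
      using assms by (intro card_Un_disjoint) auto
    moreover have "(A - B) \<union> (A \<inter> B) = A" by blast
    ultimately show ?thesis by simp
  qed
  have b: "card B = card (B - A) + card (A \<inter> B)"
  proof -
    have "card ((B - A) \<union> (A \<inter> B)) = card (B - A) + card (A \<inter> B)"
      using assms by (intro card_Un_disjoint) auto
    moreover have "(B - A) \<union> (A \<inter> B) = B" by blast
    ultimately show ?thesis by simp
  qed
  have c: "card ((A - B) \<union> (B - A)) = card (A - B) + card (B - A)"
    using assms by (intro card_Un_disjoint) auto
  show ?thesis unfolding a b c by (simp; argo)
qed

lemma length_pmult: "length (pmult s t) = min (length s) (length t)"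
  by (simp add: pmult_def)

lemma nth_pmult: "q < length s \<Longrightarrow> q < length t \<Longrightarrow> pmult s t ! q = pmult1 (s ! q) (t ! q)"
  by (simp add: pmult_def)

lemma anti_pmult:
  assumes "length s = length u" "length t = length u"
  shows "anticommutes (pmult s t) u \<longleftrightarrow> (anticommutes s u \<noteq> anticommutes t u)"
proof -
  let ?A = "{q. q < length u \<and> anticomm1 (s ! q) (u ! q)}"
  let ?B = "{q. q < length u \<and> anticomm1 (t ! q) (u ! q)}"
  have "{q. q < length (pmult s t) \<and> anticomm1 (pmult s t ! q) (u ! q)} = (?A - ?B) \<union> (?B - ?A)"
    using assms by (auto simp: length_pmult nth_pmult pm1_anti)
  moreover have "finite ?A" "finite ?B" by auto
  ultimately show ?thesis using odd_symdiff[of ?A ?B] assms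
    by (simp add: anticommutes_def length_pmult)
qed

lemma anti_sym:
  assumes "length s = length t"
  shows "anticommutes s t = anticommutes t s"
  using assms by (simp add: anticommutes_def anti1_sym)

lemma pmult_cancel:
  assumes "length s = length t"
  shows "pmult (pmult s t) t = s"
  using assms by (intro nth_equalityI) (auto simp: length_pmult nth_pmult pm1_cancel)

theorem corollaryC3:
  fixes n d i j :: nat and K M :: "pstring set" and b :: "nat \<Rightarrow> pstring" and R :: "nat set"
  assumes "pauli_cartan n K M"
    and "\<forall>p\<in>{1..d}. b p \<in> M"
    and "\<forall>p\<in>{1..d}. \<forall>q\<in>{1..d}. commutes (b p) (b q)"
    and "i \<in> {1..d}" and "j \<in> {1..d}" and "i \<noteq> j"
    and "R \<subseteq> {1..d}" and "i \<notin> R" and "j \<notin> R"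
    and "ksub K b {i, j} R \<noteq> {}"
  shows "card (ksub K b {i} ({j} \<union> R)) = card (ksub K b {j} ({i} \<union> R))"
proof -
  note pc = assms(1)[unfolded pauli_cartan_def]
  have lenK: "\<And>s. s \<in> K \<Longrightarrow> length s = n" and lenM: "\<And>s. s \<in> M \<Longrightarrow> length s = n"
    using pc by (auto simp: is_pauli_string_def)
  have KK: "pmult a c \<in> K" if "a \<in> K" "c \<in> K" "anticommutes a c" for a c
  proof -
    have "comm_support a c \<subseteq> K" using pc that(1,2) by blast
    then show ?thesis using that(3) by (simp add: comm_support_def)
  qed
  have MM: "pmult a c \<in> K" if "a \<in> M" "c \<in> M" "anticommutes a c" for a c
  proof -
    have "comm_support a c \<subseteq> K" using pc that(1,2) by blast
    then show ?thesis using that(3) by (simp add: comm_support_def)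
  qed
  have KM: "pmult a c \<in> M" if "a \<in> K" "c \<in> M" "anticommutes a c" for a c
  proof -
    have "comm_support a c \<subseteq> M" using pc that(1,2) by blast
    then show ?thesis using that(3) by (simp add: comm_support_def)
  qed
  obtain k0 where k0: "k0 \<in> ksub K b {i, j} R" using assms(10) by blast
  have k0K: "k0 \<in> K" and k0i: "anticommutes k0 (b i)" and k0j: "anticommutes k0 (b j)"
    and k0R: "\<And>r. r \<in> R \<Longrightarrow> commutes k0 (b r)"
    using k0 by (auto simp: ksub_def)
  have bM: "\<And>p. p \<in> {1..d} \<Longrightarrow> b p \<in> M" using assms(2) by auto
  have bc: "\<And>p q. p \<in> {1..d} \<Longrightarrow> q \<in> {1..d} \<Longrightarrow> \<not> anticommutes (b p) (b q)"
    using assms(3) by (auto simp: commutes_def)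
  have biM: "b i \<in> M" and bjM: "b j \<in> M" using bM assms(4,5) by auto
  have lb: "\<And>p. p \<in> {1..d} \<Longrightarrow> length (b p) = n" using bM lenM by auto
  define m where "m = pmult k0 (b i)"
  have mM: "m \<in> M" unfolding m_def using KM k0K biM k0i by auto
  have lm: "length m = n" using mM lenM by auto
  have lk0: "length k0 = n" using k0K lenK by auto
  have mj: "anticommutes m (b j)" unfolding m_def
    using anti_pmult[of k0 "b j" "b i"] lk0 lb assms(4,5) k0j bc by auto
  define c where "c = pmult m (b j)"
  have cK: "c \<in> K" unfolding c_def using MM mM bjM mj by auto
  have lc: "length c = n" using cK lenK by auto
  have lbi: "length (b i) = n" and lbj: "length (b j) = n" using lb assms(4,5) by auto
  have cgen: "anticommutes c u \<longleftrightarrow> ((anticommutes k0 u \<noteq> anticommutes (b i) u) \<noteq> anticommutes (b j) u)"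
    if "length u = n" for u
  proof -
    have "anticommutes c u \<longleftrightarrow> (anticommutes m u \<noteq> anticommutes (b j) u)"
      unfolding c_def using anti_pmult[of m u "b j"] lm lbj that by simp
    moreover have "anticommutes m u \<longleftrightarrow> (anticommutes k0 u \<noteq> anticommutes (b i) u)"
      unfolding m_def using anti_pmult[of k0 u "b i"] lk0 lbi that by simp
    ultimately show ?thesis by simp
  qed
  have cb: "\<And>p. p \<in> {1..d} \<Longrightarrow> anticommutes c (b p) \<longleftrightarrow>
      ((anticommutes k0 (b p) \<noteq> anticommutes (b i) (b p)) \<noteq> anticommutes (b j) (b p))"
    using cgen lb by blast
  have cb': "\<And>p. p \<in> {1..d} \<Longrightarrow> anticommutes c (b p) \<longleftrightarrow> anticommutes k0 (b p)"
    using cb bc assms(4,5) by auto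
  have ck0: "\<not> anticommutes c k0"
  proof -
    have "anticommutes c k0 \<longleftrightarrow> ((anticommutes k0 k0 \<noteq> anticommutes (b i) k0) \<noteq> anticommutes (b j) k0)"
      using cgen lk0 by blast
    moreover have "\<not> anticommutes k0 k0" by (simp add: anticommutes_def anticomm1_def)
    moreover have "anticommutes (b i) k0" "anticommutes (b j) k0"
      using anti_sym[of "b i" k0] anti_sym[of "b j" k0] k0i k0j lk0 lbi lbj by simp_all
    ultimately show ?thesis by simp
  qed
  define f where "f k = (if anticommutes k k0 then pmult k k0 else pmult k c)" for k
  have fin: "finite K"
  proof -
    have u: "(UNIV::pauli set) = {PI,PX,PY,PZ}" using pauli.exhaust by auto
    have "finite {xs. set xs \<subseteq> (UNIV::pauli set) \<and> length xs = n}"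
      by (rule finite_lists_length_eq) (simp add: u)
    moreover have "K \<subseteq> {xs. set xs \<subseteq> (UNIV::pauli set) \<and> length xs = n}" using lenK by auto
    ultimately show ?thesis by (rule finite_subset[rotated])
  qed
  have main: "\<And>x y k. x \<in> {1..d} \<Longrightarrow> y \<in> {1..d} \<Longrightarrow> x \<notin> R \<Longrightarrow> y \<notin> R \<Longrightarrow> x \<noteq> y \<Longrightarrow>
     anticommutes k0 (b x) \<Longrightarrow> anticommutes k0 (b y) \<Longrightarrow>
     {x, y} = {i, j} \<Longrightarrow> k \<in> ksub K b {x} ({y} \<union> R) \<Longrightarrow> f k \<in> ksub K b {y} ({x} \<union> R) \<and> f (f k) = k"
  proof -
    fix x y k
    assume x: "x \<in> {1..d}" and y: "y \<in> {1..d}" and xR: "x \<notin> R" and yR: "y \<notin> R" and "x \<noteq> y"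
      and kx0: "anticommutes k0 (b x)" and ky0: "anticommutes k0 (b y)" and xy: "{x, y} = {i, j}"
      and k: "k \<in> ksub K b {x} ({y} \<union> R)"
    have kK: "k \<in> K" and kx: "anticommutes k (b x)" and ky: "\<not> anticommutes k (b y)"
      and kR: "\<And>r. r \<in> R \<Longrightarrow> \<not> anticommutes k (b r)"
      using k by (auto simp: ksub_def commutes_def)
    have lk: "length k = n" using kK lenK by auto
    have Rd: "\<And>r. r \<in> R \<Longrightarrow> r \<in> {1..d}" using assms(7) by auto
    show "f k \<in> ksub K b {y} ({x} \<union> R) \<and> f (f k) = k"
    proof (cases "anticommutes k k0")
      case True
      have fk: "f k = pmult k k0" using True f_def by simp
      have inK: "pmult k k0 \<in> K" using KK kK k0K True by auto
      have ab: "anticommutes (pmult k k0) (b p) \<longleftrightarrow> (anticommutes k (b p) \<noteq> anticommutes k0 (b p))" if "p \<in> {1..d}" for p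
        using lb[OF that] lk lk0 by (simp add: anti_pmult)
      have "pmult k k0 \<in> ksub K b {y} ({x} \<union> R)"
      proof -
        have "anticommutes (pmult k k0) (b y)" using ab[OF y] ky ky0 by simp
        moreover have "\<not> anticommutes (pmult k k0) (b x)" using ab[OF x] kx kx0 by simp
        moreover have "\<not> anticommutes (pmult k k0) (b r)" if "r \<in> R" for r
          using ab[OF Rd[OF that]] kR[OF that] k0R[OF that] by (simp add: commutes_def)
        ultimately show ?thesis using inK by (simp add: ksub_def commutes_def)
      qed
      moreover have "anticommutes (pmult k k0) k0"
        using anti_pmult[of k k0 k0] lk lk0 True
        by (simp add: anticommutes_def anticomm1_def)
      ultimately show ?thesis unfolding fk using pmult_cancel[of k k0] lk lk0 by (simp add: f_def)
    next
      case False
      have fk: "f k = pmult k c" using False f_def by simp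
      have kc: "anticommutes k c"
      proof -
        have "anticommutes c k \<longleftrightarrow> ((anticommutes k0 k \<noteq> anticommutes (b i) k) \<noteq> anticommutes (b j) k)"
          using cgen lk by blast
        moreover have "anticommutes k0 k = anticommutes k k0" using anti_sym lk lk0 by metis
        moreover have "anticommutes (b p) k = anticommutes k (b p)" if "p \<in> {1..d}" for p
          using anti_sym lk lb that by metis
        moreover have "anticommutes (b i) k \<noteq> anticommutes (b j) k"
          using xy kx ky calculation(3) x y assms(6) by (auto simp: doubleton_eq_iff)
        ultimately have "anticommutes c k" using False by simp
        then show ?thesis using anti_sym lk lc by metis
      qed
      have inK: "pmult k c \<in> K" using KK kK cK kc by auto
      have ab: "anticommutes (pmult k c) (b p) \<longleftrightarrow> (anticommutes k (b p) \<noteq> anticommutes k0 (b p))" if "p \<in> {1..d}" for p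
        using lb[OF that] lk lc cb'[OF that] by (simp add: anti_pmult)
      have "pmult k c \<in> ksub K b {y} ({x} \<union> R)"
      proof -
        have "anticommutes (pmult k c) (b y)" using ab[OF y] ky ky0 by simp
        moreover have "\<not> anticommutes (pmult k c) (b x)" using ab[OF x] kx kx0 by simp
        moreover have "\<not> anticommutes (pmult k c) (b r)" if "r \<in> R" for r
          using ab[OF Rd[OF that]] kR[OF that] k0R[OF that] by (simp add: commutes_def)
        ultimately show ?thesis using inK by (simp add: ksub_def commutes_def)
      qed
      moreover have "\<not> anticommutes (pmult k c) k0"
        using anti_pmult[of k k0 c] lk lk0 lc False ck0 by simp
      ultimately show ?thesis unfolding fk using pmult_cancel[of k c] lk lc by (simp add: f_def)
    qed
  qed
  let ?A = "ksub K b {i} ({j} \<union> R)" and ?B = "ksub K b {j} ({i} \<union> R)"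
  have finA: "finite ?A" and finB: "finite ?B"
    using fin by (auto simp: ksub_def)
  have AB: "f k \<in> ?B \<and> f (f k) = k" if "k \<in> ?A" for k
    by (rule main[of i j k, OF assms(4,5,8,9,6) k0i k0j refl that])
  have BA: "f k \<in> ?A \<and> f (f k) = k" if "k \<in> ?B" for k
    by (rule main[of j i k, OF assms(5,4,9,8) _ k0j k0i insert_commute that]) (use assms(6) in simp)
  have "card ?A \<le> card ?B"
  proof (rule card_inj_on_le[OF _ _ finB])
    show "inj_on f ?A" by (rule inj_on_inverseI[where g=f]) (use AB in blast)
    show "f ` ?A \<subseteq> ?B" using AB by auto
  qed
  moreover have "card ?B \<le> card ?A"
  proof (rule card_inj_on_le[OF _ _ finA])
    show "inj_on f ?B" by (rule inj_on_inverseI[where g=f]) (use BA in blast)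
    show "f ` ?B \<subseteq> ?A" using BA by auto
  qed
  ultimately show ?thesis by simp
qed

end
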